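(* Let $T$ be a binary phylogenetic $X$-tree with $|X| = n \geq 3$. Let $x,y \in X$ with $x \neq y$ such that $x,y$ do not form a cherry in $T$. Let $q = \max\{2, \lfloor (n-1)/2 \rfloor\}$. Then $T$ contains $q$ pairwise edge-disjoint leaf-to-leaf paths $P_1,\ldots,P_q$ such that $x$ is an endpoint of $P_1$ and $y$ is an endpoint of $P_2$.
   Context: A phylogenetic $X$-tree is a tree with no vertices of degree 2 whose leaves are bijectively labelled by (and identified with) $X$; binary means maximum degree 3. Two leaves $x,y$ form a cherry $[x,y]$ if they are adjacent to the same vertex. A leaf-to-leaf path is a path in $T$ whose two endpoints are leaves (distinct) and whose interior vertices are non-leaves. *)

theory Defs
  imports Main
begin

definition graph :: "'v set \<Rightarrow> 'v set set \<Rightarrow> bool" where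
  "graph V E \<longleftrightarrow> finite V \<and> (\<forall>e\<in>E. e \<subseteq> V \<and> card e = 2)"

definition adj :: "'v set set \<Rightarrow> 'v \<Rightarrow> 'v \<Rightarrow> bool" where
  "adj E u v \<longleftrightarrow> {u, v} \<in> E"

definition degree :: "'v set set \<Rightarrow> 'v \<Rightarrow> nat" where
  "degree E v = card {e \<in> E. v \<in> e}"

definition connected_graph :: "'v set \<Rightarrow> 'v set set \<Rightarrow> bool" where
  "connected_graph V E \<longleftrightarrow>
     (\<forall>u\<in>V. \<forall>v\<in>V. (u, v) \<in> {(a, b). adj E a b}\<^sup>*)"

definition is_tree :: "'v set \<Rightarrow> 'v set set \<Rightarrow> bool" where
  "is_tree V E \<longleftrightarrow> graph V E \<and> V \<noteq> {} \<and> connected_graph V E \<and> card E + 1 = card V"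

definition leaves :: "'v set \<Rightarrow> 'v set set \<Rightarrow> 'v set" where
  "leaves V E = {v \<in> V. degree E v = 1}"

definition binary_phylo_tree :: "'v set \<Rightarrow> 'v set set \<Rightarrow> 'v set \<Rightarrow> bool" where
  "binary_phylo_tree V E X \<longleftrightarrow> is_tree V E \<and> leaves V E = X \<and>
     (\<forall>v\<in>V. degree E v \<noteq> 2 \<and> degree E v \<le> 3)"

definition cherry :: "'v set set \<Rightarrow> 'v \<Rightarrow> 'v \<Rightarrow> bool" where
  "cherry E x y \<longleftrightarrow> (\<exists>w. adj E x w \<and> adj E y w)"

definition is_path :: "'v set \<Rightarrow> 'v set set \<Rightarrow> 'v list \<Rightarrow> bool" where
  "is_path V E p \<longleftrightarrow> p \<noteq> [] \<and> distinct p \<and> set p \<subseteq> V \<and>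
     (\<forall>i. Suc i < length p \<longrightarrow> adj E (p ! i) (p ! Suc i))"

definition path_edges :: "'v list \<Rightarrow> 'v set set" where
  "path_edges p = {{p ! i, p ! Suc i} | i. Suc i < length p}"

definition leaf_to_leaf_path :: "'v set \<Rightarrow> 'v set set \<Rightarrow> 'v list \<Rightarrow> bool" where
  "leaf_to_leaf_path V E p \<longleftrightarrow> is_path V E p \<and> length p \<ge> 2 \<and>
     hd p \<in> leaves V E \<and> last p \<in> leaves V E \<and>
     (\<forall>i. 0 < i \<and> i < length p - 1 \<longrightarrow> p ! i \<notin> leaves V E)"

definition endpoint :: "'v \<Rightarrow> 'v list \<Rightarrow> bool" where
  "endpoint x p \<longleftrightarrow> x = hd p \<or> x = last p"

end

theory Submission
  imports Defs
begin

abbreviation RR :: "'v set set \<Rightarrow> ('v \<times> 'v) set" where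
  "RR E \<equiv> {(a, b). adj E a b}"

lemma adj_sym: "adj E a b \<longleftrightarrow> adj E b a"
  by (simp add: adj_def insert_commute)

lemma RR_sym: "(a, b) \<in> (RR E)\<^sup>* \<Longrightarrow> (b, a) \<in> (RR E)\<^sup>*"
proof (induction rule: rtrancl_induct)
  case base then show ?case by simp
next
  case (step y z)
  then have "(z, y) \<in> RR E" by (simp add: adj_sym)
  then show ?case using step.IH by (meson converse_rtrancl_into_rtrancl)
qed

lemma RR_mono: "E \<subseteq> F \<Longrightarrow> (a, b) \<in> (RR E)\<^sup>* \<Longrightarrow> (a, b) \<in> (RR F)\<^sup>*"
  by (erule rtrancl_mono[THEN subsetD, rotated]) (auto simp: adj_def)

lemma isolated_reach:
  assumes "\<forall>e\<in>E. v \<notin> e" "(v, z) \<in> (RR E)\<^sup>*" shows "z = v"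
  using assms(2) by (induction rule: rtrancl_induct) (use assms(1) in \<open>auto simp: adj_def\<close>)

lemma path_edges_rev_sub: "path_edges (rev q) \<subseteq> path_edges q"
proof
  fix e assume "e \<in> path_edges (rev q)"
  then obtain i where i: "Suc i < length q" "e = {rev q ! i, rev q ! Suc i}"
    by (auto simp: path_edges_def)
  let ?j = "length q - Suc (Suc i)"
  have "Suc ?j < length q" using i by simp
  moreover have "length q - Suc i = Suc ?j" using i by simp
  moreover have "e = {q ! ?j, q ! Suc ?j}"
    using i calculation by (auto simp: rev_nth)
  ultimately show "e \<in> path_edges q" by (auto simp: path_edges_def)
qed

lemma path_edges_rev: "path_edges (rev p) = path_edges p"
  using path_edges_rev_sub[of p] path_edges_rev_sub[of "rev p"] by auto

lemma is_path_rev: assumes "is_path V E p" shows "is_path V E (rev p)"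
proof -
  have "adj E (rev p ! i) (rev p ! Suc i)" if i: "Suc i < length p" for i
  proof -
    let ?j = "length p - Suc (Suc i)"
    have "Suc ?j < length p" using i by simp
    then have "adj E (p ! ?j) (p ! Suc ?j)" using assms by (simp add: is_path_def)
    moreover have "length p - Suc i = Suc ?j" using i by simp
    ultimately show ?thesis using i by (simp add: rev_nth adj_sym)
  qed
  then show ?thesis using assms by (auto simp: is_path_def)
qed

lemma is_path_Cons:
  assumes "is_path V E p" "v \<in> V" "v \<notin> set p" "adj E v (hd p)"
  shows "is_path V E (v # p)"
proof -
  have "adj E ((v#p) ! i) ((v#p) ! Suc i)" if "Suc i < length (v#p)" for i
  proof (cases i)
    case 0 then show ?thesis using assms by (auto simp: is_path_def hd_conv_nth)
  next
    case (Suc k) then show ?thesis using assms that by (auto simp: is_path_def)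
  qed
  then show ?thesis using assms by (auto simp: is_path_def)
qed

lemma path_edges_Cons: assumes "p \<noteq> []"
  shows "path_edges (v # p) = insert {v, hd p} (path_edges p)"
proof
  show "path_edges (v # p) \<subseteq> insert {v, hd p} (path_edges p)"
  proof
    fix e assume "e \<in> path_edges (v # p)"
    then obtain i where i: "Suc i < Suc (length p)" "e = {(v#p) ! i, (v#p) ! Suc i}"
      by (auto simp: path_edges_def)
    show "e \<in> insert {v, hd p} (path_edges p)"
    proof (cases i)
      case 0 then show ?thesis using i assms by (simp add: hd_conv_nth)
    next
      case (Suc k) then show ?thesis using i by (auto simp: path_edges_def)
    qed
  qed
next
  show "insert {v, hd p} (path_edges p) \<subseteq> path_edges (v # p)"
  proof
    fix e assume "e \<in> insert {v, hd p} (path_edges p)"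
    then show "e \<in> path_edges (v # p)"
    proof
      assume "e = {v, hd p}"
      then have "e = {(v#p) ! 0, (v#p) ! Suc 0}" using assms by (simp add: hd_conv_nth)
      then show ?thesis using assms unfolding path_edges_def by force
    next
      assume "e \<in> path_edges p"
      then obtain i where "Suc i < length p" "e = {p ! i, p ! Suc i}" by (auto simp: path_edges_def)
      then have "Suc (Suc i) < length (v#p)" "e = {(v#p) ! Suc i, (v#p) ! Suc (Suc i)}" by auto
      then show ?thesis unfolding path_edges_def by blast
    qed
  qed
qed

lemma path_edges_subset: "is_path V E p \<Longrightarrow> path_edges p \<subseteq> E"
  by (auto simp: path_edges_def is_path_def adj_def)

lemma path_edges_sub_set: "e \<in> path_edges p \<Longrightarrow> e \<subseteq> set p \<and> e \<noteq> {}"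
  by (auto simp: path_edges_def)

lemma is_path_mono: "is_path V E p \<Longrightarrow> V \<subseteq> V' \<Longrightarrow> E \<subseteq> E' \<Longrightarrow> is_path V' E' p"
  by (auto simp: is_path_def adj_def)

lemma path_edges_nonempty: assumes "2 \<le> length p" shows "path_edges p \<noteq> {}"
proof -
  have "Suc 0 < length p" using assms by simp
  then have "{p ! 0, p ! Suc 0} \<in> path_edges p" unfolding path_edges_def by blast
  then show ?thesis by blast
qed

lemma graph_finite_E: "graph V E \<Longrightarrow> finite E"
  unfolding graph_def by (meson Pow_iff finite_Pow_iff rev_finite_subset subsetI)

lemma interior_not_leaf:
  assumes "graph V E" "is_path V E p" "0 < i" "i < length p - 1"
  shows "p ! i \<notin> leaves V E"
proof
  assume lf: "p ! i \<in> leaves V E"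
  obtain k where k: "i = Suc k" using assms(3) by (cases i) auto
  have d: "distinct p" and ad: "\<And>j. Suc j < length p \<Longrightarrow> {p ! j, p ! Suc j} \<in> E"
    using assms(2) by (auto simp: is_path_def adj_def)
  have e1: "{p ! k, p ! i} \<in> E" using ad[of k] k assms(4) by auto
  have e2: "{p ! i, p ! Suc i} \<in> E" using ad[of i] assms(4) by auto
  have ne: "p ! k \<noteq> p ! Suc i" using d k assms(4) by (simp add: nth_eq_iff_index_eq)
  have ne2: "p ! k \<noteq> p ! i" using d k assms(4) by (simp add: nth_eq_iff_index_eq)
  have "{p ! k, p ! i} \<noteq> {p ! i, p ! Suc i}" using ne ne2 by (auto simp: doubleton_eq_iff)
  then have "{{p ! k, p ! i}, {p ! i, p ! Suc i}} \<subseteq> {e \<in> E. p ! i \<in> e}" using e1 e2 by auto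
  moreover have "finite {e \<in> E. p ! i \<in> e}" using graph_finite_E[OF assms(1)] by auto
  ultimately have "card {{p ! k, p ! i}, {p ! i, p ! Suc i}} \<le> degree E (p ! i)"
    unfolding degree_def using card_mono by blast
  then have "2 \<le> degree E (p ! i)" using \<open>{p ! k, p ! i} \<noteq> _\<close> by simp
  then show False using lf by (simp add: leaves_def)
qed

lemma card_filter_sum: "finite E \<Longrightarrow> card {e \<in> E. P e} = (\<Sum>e\<in>E. if P e then 1 else 0)"
  by (simp add: sum.inter_filter[symmetric])

lemma handshake:
  assumes "finite V" "finite E" "\<forall>e\<in>E. e \<subseteq> V \<and> card e = 2"
  shows "(\<Sum>v\<in>V. degree E v) = 2 * card E"
proof -
  have "(\<Sum>v\<in>V. degree E v) = (\<Sum>v\<in>V. \<Sum>e\<in>E. if v \<in> e then 1 else (0::nat))"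
    unfolding degree_def using assms(2) by (simp add: card_filter_sum)
  also have "\<dots> = (\<Sum>e\<in>E. \<Sum>v\<in>V. if v \<in> e then 1 else (0::nat))" by (rule sum.swap)
  also have "\<dots> = (\<Sum>e\<in>E. card {v \<in> V. v \<in> e})"
    using assms(1) by (intro sum.cong refl) (simp add: card_filter_sum)
  also have "\<dots> = (\<Sum>e\<in>E. 2)"
  proof (rule sum.cong)
    fix e assume "e \<in> E"
    then have "{v \<in> V. v \<in> e} = e" using assms(3) by auto
    then show "card {v \<in> V. v \<in> e} = 2" using assms(3) \<open>e \<in> E\<close> by simp
  qed simp
  finally show ?thesis by simp
qed

lemma tree_deg_pos:
  assumes "is_tree V E" "2 \<le> card V" "v \<in> V"
  shows "1 \<le> degree E v"
proof -
  have fin: "finite V" using assms(1) by (simp add: is_tree_def graph_def)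
  have "\<not> V \<subseteq> {v}"
  proof
    assume "V \<subseteq> {v}"
    then have "card V \<le> card {v}" by (intro card_mono) auto
    then show False using assms(2) by simp
  qed
  then obtain w where w: "w \<in> V" "w \<noteq> v" by blast
  have "(w, v) \<in> (RR E)\<^sup>*" using assms(1) w assms(3) by (simp add: is_tree_def connected_graph_def)
  then obtain z where "adj E z v" using w(2) by (auto elim: rtranclE)
  then have "{z, v} \<in> {e \<in> E. v \<in> e}" by (simp add: adj_def)
  moreover have "finite E" using graph_finite_E assms(1) is_tree_def by blast
  then have "finite {e \<in> E. v \<in> e}" by simp
  ultimately have "0 < card {e \<in> E. v \<in> e}" using card_gt_0_iff by blast
  then show ?thesis unfolding degree_def by simp
qed

lemma tree_leaf_exists:
  assumes "is_tree V E" "2 \<le> card V"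
  shows "\<exists>v\<in>V. degree E v = 1"
proof (rule ccontr)
  assume na: "\<not> ?thesis"
  have "\<forall>v\<in>V. 2 \<le> degree E v"
  proof
    fix v assume "v \<in> V"
    then have "1 \<le> degree E v" "degree E v \<noteq> 1" using tree_deg_pos[OF assms] na by auto
    then show "2 \<le> degree E v" by linarith
  qed
  then have "(\<Sum>v\<in>V. 2) \<le> (\<Sum>v\<in>V. degree E v)" by (intro sum_mono) blast
  moreover have "(\<Sum>v\<in>V. degree E v) = 2 * card E"
    using assms(1) graph_finite_E[of V E] by (intro handshake) (auto simp: is_tree_def graph_def)
  moreover have "card E + 1 = card V" using assms(1) by (simp add: is_tree_def)
  ultimately show False by simp
qed

lemma leaf_edge:
  assumes "graph V E" "degree E v = 1"
  obtains u where "{v,u} \<in> E" "u \<noteq> v" "\<forall>e\<in>E. v \<in> e \<longrightarrow> e = {v,u}"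
proof -
  obtain e0 where e0: "{e \<in> E. v \<in> e} = {e0}" using assms(2) unfolding degree_def
    by (rule card_1_singletonE)
  then have ine: "e0 \<in> E" "v \<in> e0" by auto
  then have "card e0 = 2" using assms(1) by (simp add: graph_def)
  then obtain a b where ab: "e0 = {a,b}" "a \<noteq> b" unfolding card_2_iff by blast
  have "\<exists>u. e0 = {v,u} \<and> u \<noteq> v"
  proof (cases "v = a")
    case True then show ?thesis using ab by blast
  next
    case False then have "v = b" using ab ine by blast
    then show ?thesis using ab by (metis insert_commute)
  qed
  then obtain u where "e0 = {v,u}" "u \<noteq> v" by blast
  moreover have "\<forall>e\<in>E. v \<in> e \<longrightarrow> e = e0" using e0 by blast
  ultimately show ?thesis using that ine by blast
qed

lemma leaf_del_reach:
  assumes "u \<noteq> v" "\<forall>e\<in>F. v \<in> e \<longrightarrow> e = {v,u}"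
    and "(a, b) \<in> (RR F)\<^sup>*" "a \<noteq> v"
  shows "(b \<noteq> v \<longrightarrow> (a, b) \<in> (RR (F - {{v,u}}))\<^sup>*) \<and> (b = v \<longrightarrow> (a, u) \<in> (RR (F - {{v,u}}))\<^sup>*)"
using assms(3) proof (induction rule: rtrancl_induct)
  case base then show ?case using assms(4) by simp
next
  case (step y z)
  have yz: "{y,z} \<in> F" using step(2) by (simp add: adj_def)
  show ?case
  proof (cases "y = v")
    case True
    then have "{y,z} = {v,u}" using assms(2) yz by auto
    then have "z = u" using True assms(1) by (auto simp: doubleton_eq_iff)
    then show ?thesis using step.IH True assms(1) by auto
  next
    case False
    then have IH: "(a, y) \<in> (RR (F - {{v,u}}))\<^sup>*" using step.IH by simp
    show ?thesis
    proof (cases "z = v")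
      case True
      then have "{y,z} = {v,u}" using assms(2) yz by auto
      then have "y = u" using True False by (auto simp: doubleton_eq_iff)
      then show ?thesis using IH True by simp
    next
      case False
      then have "{y,z} \<noteq> {v,u}" using \<open>y \<noteq> v\<close> by (auto simp: doubleton_eq_iff)
      then have "(y,z) \<in> RR (F - {{v,u}})" using yz by (simp add: adj_def)
      then show ?thesis using IH False by (meson rtrancl_into_rtrancl)
    qed
  qed
qed

lemma tree_del_leaf:
  assumes "is_tree V E" "{v,u} \<in> E" "u \<noteq> v" "\<forall>e\<in>E. v \<in> e \<longrightarrow> e = {v,u}"
  shows "is_tree (V - {v}) (E - {{v,u}})" "card (V - {v}) < card V" "v \<in> V" "u \<in> V"
proof -
  have g: "graph V E" and fin: "finite V" using assms(1) by (auto simp: is_tree_def graph_def)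
  have finE: "finite E" using graph_finite_E[OF g] .
  show vV: "v \<in> V" and uV: "u \<in> V" using assms(2) g by (auto simp: graph_def)
  show "card (V - {v}) < card V" using vV fin by (meson card_Diff1_less)
  have gr: "graph (V - {v}) (E - {{v,u}})"
    using g assms(4) unfolding graph_def by blast
  have conn: "connected_graph (V - {v}) (E - {{v,u}})"
    unfolding connected_graph_def
  proof (intro ballI)
    fix a b assume "a \<in> V - {v}" "b \<in> V - {v}"
    moreover have "(a, b) \<in> (RR E)\<^sup>*" using assms(1) calculation
      by (auto simp: is_tree_def connected_graph_def)
    ultimately show "(a, b) \<in> (RR (E - {{v,u}}))\<^sup>*"
      using leaf_del_reach[OF assms(3) assms(4)] by blast
  qed
  have "card E > 0" using finE assms(2) card_gt_0_iff by blast
  then have "card (E - {{v,u}}) + 1 = card (V - {v})"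
    using assms(1) assms(2) vV fin finE by (auto simp: is_tree_def card_Diff_singleton)
  then show "is_tree (V - {v}) (E - {{v,u}})"
    using gr conn uV assms(3) unfolding is_tree_def by blast
qed

lemma tree_induct[consumes 1, case_names single leaf]:
  assumes "is_tree V E"
  and single: "\<And>V E. is_tree V E \<Longrightarrow> card V = 1 \<Longrightarrow> E = {} \<Longrightarrow> P V E"
  and leaf: "\<And>V E v u. is_tree V E \<Longrightarrow> 2 \<le> card V \<Longrightarrow> {v,u} \<in> E \<Longrightarrow> u \<noteq> v
      \<Longrightarrow> (\<forall>e\<in>E. v \<in> e \<longrightarrow> e = {v,u}) \<Longrightarrow> v \<in> V \<Longrightarrow> u \<in> V
      \<Longrightarrow> is_tree (V - {v}) (E - {{v,u}}) \<Longrightarrow> P (V - {v}) (E - {{v,u}}) \<Longrightarrow> P V E"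
  shows "P V E"
  using assms(1)
proof (induction "card V" arbitrary: V E rule: less_induct)
  case less
  have fin: "finite V" "V \<noteq> {}" using less.prems by (auto simp: is_tree_def graph_def)
  then have "card V \<ge> 1" by (simp add: Suc_leI card_gt_0_iff)
  show ?case
  proof (cases "card V = 1")
    case True
    then have "card E = 0" using less.prems by (simp add: is_tree_def)
    moreover have "finite E" using graph_finite_E less.prems is_tree_def by blast
    ultimately have "E = {}" by simp
    then show ?thesis using single less.prems True by blast
  next
    case False
    then have c2: "2 \<le> card V" using \<open>card V \<ge> 1\<close> by linarith
    obtain v where v: "v \<in> V" "degree E v = 1" using tree_leaf_exists[OF less.prems c2] by blast
    obtain u where u: "{v,u} \<in> E" "u \<noteq> v" "\<forall>e\<in>E. v \<in> e \<longrightarrow> e = {v,u}"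
      using leaf_edge[of V E v] v less.prems by (auto simp: is_tree_def)
    note d = tree_del_leaf[OF less.prems u]
    have "P (V - {v}) (E - {{v,u}})" using less.hyps[OF d(2) d(1)] .
    then show ?thesis using leaf[OF less.prems c2 u d(3) d(4) d(1)] by blast
  qed
qed

lemma hd_last_ne: "is_path V E p \<Longrightarrow> 2 \<le> length p \<Longrightarrow> hd p \<noteq> last p"
  by (auto simp: is_path_def hd_conv_nth last_conv_nth nth_eq_iff_index_eq)

lemma orient:
  assumes "is_path V E p" "endpoint u p"
  obtains q where "is_path V E q" "length q = length p" "set q = set p"
    "path_edges q = path_edges p" "hd q = u" "{hd q, last q} = {hd p, last p}"
proof (cases "hd p = u")
  case True then show ?thesis using that assms by blast
next
  case False
  then have "last p = u" using assms(2) by (auto simp: endpoint_def)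
  moreover have "p \<noteq> []" using assms(1) by (simp add: is_path_def)
  ultimately show ?thesis using that[of "rev p"] is_path_rev[OF assms(1)] path_edges_rev[of p]
    by (auto simp: hd_rev last_rev)
qed

definition pairing :: "'v set \<Rightarrow> 'v set set \<Rightarrow> 'v set \<Rightarrow> 'v list set \<Rightarrow> bool" where
  "pairing V E S P \<longleftrightarrow> finite P \<and>
     (\<forall>p\<in>P. is_path V E p \<and> 2 \<le> length p \<and> hd p \<in> S \<and> last p \<in> S) \<and>
     (\<forall>s\<in>S. \<exists>p\<in>P. endpoint s p) \<and>
     (\<forall>p\<in>P. \<forall>p'\<in>P. p \<noteq> p' \<longrightarrow> path_edges p \<inter> path_edges p' = {} \<and>
         {hd p, last p} \<inter> {hd p', last p'} = {})"

lemma pairing_mono: "pairing V' E' S P \<Longrightarrow> V' \<subseteq> V \<Longrightarrow> E' \<subseteq> E \<Longrightarrow> pairing V E S P"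
  unfolding pairing_def using is_path_mono by metis

lemma pairing_exists:
  assumes "is_tree V E"
  shows "\<forall>S. S \<subseteq> V \<longrightarrow> even (card S) \<longrightarrow> (\<exists>P. pairing V E S P)"
  using assms
proof (induction V E rule: tree_induct)
  case (single V E)
  show ?case
  proof (intro allI impI)
    fix S assume S: "S \<subseteq> V" "even (card S)"
    have "finite V" using single(1) by (simp add: is_tree_def graph_def)
    then have "card S \<le> card V" using card_mono S(1) by blast
    then have "card S \<le> 1" using single(2) by simp
    then have "card S = 0" using S(2) by presburger
    moreover have "finite S" using \<open>finite V\<close> S(1) finite_subset by blast
    ultimately have "S = {}" by simp
    then show "\<exists>P. pairing V E S P" by (rule_tac x="{}" in exI) (simp add: pairing_def)
  qed
next
  case (leaf V E v u)
  let ?V = "V - {v}" and ?E = "E - {{v,u}}"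
  have finV: "finite V" using leaf(1) by (simp add: is_tree_def graph_def)
  have sub: "?V \<subseteq> V" "?E \<subseteq> E" by auto
  show ?case
  proof (intro allI impI)
    fix S assume S: "S \<subseteq> V" "even (card S)"
    have finS: "finite S" using finV S(1) finite_subset by blast
    show "\<exists>P. pairing V E S P"
    proof (cases "v \<in> S")
      case False
      then have "S \<subseteq> ?V" using S by blast
      then obtain P where "pairing ?V ?E S P" using leaf.IH S(2) by blast
      then show ?thesis using pairing_mono sub by blast
    next
      case vS: True
      show ?thesis
      proof (cases "u \<in> S")
        case True
        let ?S = "S - {v, u}"
        have "card ?S = card S - 2" using vS True finS leaf(4) by (simp add: card_Diff_subset)
        moreover have "card S \<ge> 2"
        proof -
          have "card {v,u} \<le> card S" using vS True finS by (intro card_mono) auto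
          then show ?thesis using leaf(4) by simp
        qed
        ultimately have "even (card ?S)" using S(2) by simp
        moreover have "?S \<subseteq> ?V" using S by blast
        ultimately obtain P where P: "pairing ?V ?E ?S P" using leaf.IH by blast
        let ?p = "[v, u]"
        have pp: "is_path V E ?p" using leaf(3,4,6,7) by (auto simp: is_path_def adj_def)
        have pe: "path_edges ?p = {{v,u}}" by (auto simp: path_edges_def less_Suc_eq)
        have "pairing V E S (insert ?p P)"
          unfolding pairing_def
        proof (intro conjI)
          show "finite (insert ?p P)" using P by (simp add: pairing_def)
          show "\<forall>p\<in>insert ?p P. is_path V E p \<and> 2 \<le> length p \<and> hd p \<in> S \<and> last p \<in> S"
            using P pp vS True is_path_mono[OF _ sub] unfolding pairing_def by auto
          show "\<forall>s\<in>S. \<exists>p\<in>insert ?p P. endpoint s p"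
            using P unfolding pairing_def endpoint_def by auto
          have oth: "path_edges p \<inter> path_edges ?p = {} \<and> {hd p, last p} \<inter> {hd ?p, last ?p} = {}"
            if "p \<in> P" for p
          proof -
            have "path_edges p \<subseteq> ?E" using P that path_edges_subset unfolding pairing_def by blast
            moreover have "hd p \<in> ?S" "last p \<in> ?S" using P that unfolding pairing_def by auto
            ultimately show ?thesis using pe by auto
          qed
          show "\<forall>p\<in>insert ?p P. \<forall>p'\<in>insert ?p P. p \<noteq> p' \<longrightarrow>
              path_edges p \<inter> path_edges p' = {} \<and> {hd p, last p} \<inter> {hd p', last p'} = {}"
            using P oth unfolding pairing_def by blast
        qed
        then show ?thesis by blast
      next
        case False
        let ?S = "insert u (S - {v})"
        have "card ?S = card S" using vS False finS leaf(4)
          by (simp add: card_Diff_singleton) (metis card_0_eq empty_iff Suc_pred gr0I vS)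
        moreover have "?S \<subseteq> ?V" using S leaf(4,7) by blast
        ultimately obtain P where P: "pairing ?V ?E ?S P" using leaf.IH S(2) by metis
        obtain p0 where p0: "p0 \<in> P" "endpoint u p0" using P unfolding pairing_def by blast
        have p0p: "is_path ?V ?E p0" "2 \<le> length p0" using P p0 unfolding pairing_def by auto
        obtain q where q: "is_path ?V ?E q" "length q = length p0" "set q = set p0"
          "path_edges q = path_edges p0" "hd q = u" "{hd q, last q} = {hd p0, last p0}"
          using orient[OF p0p(1) p0(2)] by blast
        have qne: "q \<noteq> []" using q(2) p0p(2) by auto
        have lq: "last q \<noteq> u" using hd_last_ne[OF q(1)] q(2,5) p0p(2) by auto
        have lqS: "last q \<in> S"
        proof -
          have "hd p0 \<in> ?S" "last p0 \<in> ?S" using P p0(1) unfolding pairing_def by auto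
          moreover have "last q \<in> {hd p0, last p0}" using q(6) by blast
          ultimately have "last q \<in> ?S" by auto
          then show ?thesis using lq by blast
        qed
        let ?p = "v # q"
        have vq: "v \<notin> set q" using q(1) by (auto simp: is_path_def)
        have pp: "is_path V E ?p"
          using is_path_Cons[OF is_path_mono[OF q(1) sub] leaf(6) vq] q(5) leaf(3) by (simp add: adj_def)
        have pe: "path_edges ?p = insert {v,u} (path_edges p0)"
          using path_edges_Cons[OF qne, of v] q(4,5) by simp
        have hp: "hd ?p = v" "last ?p = last q" using qne by auto
        let ?P = "insert ?p (P - {p0})"
        have "pairing V E S ?P"
          unfolding pairing_def
        proof (intro conjI)
          show "finite ?P" using P by (simp add: pairing_def)
          show "\<forall>p\<in>?P. is_path V E p \<and> 2 \<le> length p \<and> hd p \<in> S \<and> last p \<in> S"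
          proof
            fix p assume "p \<in> ?P"
            then show "is_path V E p \<and> 2 \<le> length p \<and> hd p \<in> S \<and> last p \<in> S"
            proof
              assume "p = ?p" then show ?thesis using pp hp vS lqS q(2) p0p(2) by simp
            next
              assume pP: "p \<in> P - {p0}"
              then have "hd p \<in> ?S" "last p \<in> ?S" "is_path ?V ?E p" "2 \<le> length p"
                using P unfolding pairing_def by auto
              moreover have "{hd p, last p} \<inter> {hd p0, last p0} = {}"
                using P pP p0 unfolding pairing_def by blast
              moreover have "u \<in> {hd p0, last p0}" using q(5,6) by blast
              ultimately show ?thesis using is_path_mono[OF _ sub] by auto
            qed
          qed
          show "\<forall>s\<in>S. \<exists>p\<in>?P. endpoint s p"
          proof
            fix s assume sS: "s \<in> S"
            show "\<exists>p\<in>?P. endpoint s p"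
            proof (cases "s = v")
              case True then show ?thesis using hp by (auto simp: endpoint_def)
            next
              case sv: False
              then have "s \<in> ?S" using sS by blast
              then obtain p where p: "p \<in> P" "endpoint s p" using P unfolding pairing_def by blast
              show ?thesis
              proof (cases "p = p0")
                case True
                then have "s \<in> {hd q, last q}" using q(6) p(2) by (auto simp: endpoint_def)
                then have "s = last q" using q(5) sS False by auto
                then show ?thesis using hp by (auto simp: endpoint_def)
              next
                case False then show ?thesis using p by blast
              qed
            qed
          qed
          have oth: "path_edges p \<inter> path_edges ?p = {} \<and> {hd p, last p} \<inter> {hd ?p, last ?p} = {}"
            if pP: "p \<in> P - {p0}" for p
          proof -
            have ip: "is_path ?V ?E p" using P pP unfolding pairing_def by auto
            have "path_edges p \<subseteq> ?E" using path_edges_subset[OF ip] .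
            moreover have "path_edges p \<inter> path_edges p0 = {}"
              "{hd p, last p} \<inter> {hd p0, last p0} = {}"
              using P pP p0 unfolding pairing_def by auto
            moreover have "hd p \<noteq> v" "last p \<noteq> v"
              using ip hd_in_set last_in_set unfolding is_path_def by blast+
            moreover have "last q \<in> {hd p0, last p0}" using q(6) by blast
            ultimately show ?thesis using pe hp by auto
          qed
          show "\<forall>p\<in>?P. \<forall>p'\<in>?P. p \<noteq> p' \<longrightarrow>
              path_edges p \<inter> path_edges p' = {} \<and> {hd p, last p} \<inter> {hd p', last p'} = {}"
            using P oth unfolding pairing_def by blast
        qed
        then show ?thesis by blast
      qed
    qed
  qed
qed

lemma graph_edge_ne: assumes "graph V E" "{c,d} \<in> E" shows "c \<noteq> d"
proof
  assume "c = d"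
  then have "card {c,d} = 1" by simp
  moreover have "card {c,d} = 2" using assms by (simp add: graph_def)
  ultimately show False by simp
qed

lemma acyclic:
  assumes "is_tree V E"
  shows "\<forall>c d. {c,d} \<in> E \<longrightarrow> (d, c) \<notin> (RR (E - {{c,d}}))\<^sup>*"
  using assms
proof (induction V E rule: tree_induct)
  case (single V E) then show ?case by simp
next
  case (leaf V E v u)
  show ?case
  proof (intro allI impI notI)
    fix c d assume cd: "{c,d} \<in> E" and r: "(d, c) \<in> (RR (E - {{c,d}}))\<^sup>*"
    have g: "graph V E" using leaf(1) by (simp add: is_tree_def)
    have cnd: "c \<noteq> d" using graph_edge_ne[OF g cd] .
    show False
    proof (cases "{c,d} = {v,u}")
      case True
      have iso: "\<forall>e\<in>E - {{c,d}}. v \<notin> e" using leaf(5) True by blast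
      have "c = v \<or> d = v" using True by (auto simp: doubleton_eq_iff)
      then show False
      proof
        assume "d = v" then show False using isolated_reach[OF iso] r cnd by blast
      next
        assume "c = v" then show False using isolated_reach[OF iso] RR_sym[OF r] cnd by blast
      qed
    next
      case False
      then have cv: "c \<noteq> v" "d \<noteq> v" using leaf(5) cd by auto
      have h: "\<forall>e\<in>E - {{c,d}}. v \<in> e \<longrightarrow> e = {v,u}" using leaf(5) by blast
      have "(d, c) \<in> (RR (E - {{c,d}} - {{v,u}}))\<^sup>*"
        using leaf_del_reach[OF leaf(4) h r cv(2)] cv(1) by blast
      moreover have "E - {{c,d}} - {{v,u}} = (E - {{v,u}}) - {{c,d}}" by blast
      moreover have "{c,d} \<in> E - {{v,u}}" using cd False by blast
      ultimately show False using leaf.IH by metis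
    qed
  qed
qed

definition side :: "'v set set \<Rightarrow> 'v \<Rightarrow> 'v \<Rightarrow> 'v set" where
  "side E c d = {z. (d, z) \<in> (RR (E - {{c,d}}))\<^sup>*}"

lemma side_self: "d \<in> side E c d"
  by (simp add: side_def)

lemma side_not: assumes "is_tree V E" "{c,d} \<in> E" shows "c \<notin> side E c d"
proof -
  have "(d, c) \<notin> (RR (E - {{c,d}}))\<^sup>*" by (rule acyclic[OF assms(1), rule_format, OF assms(2)])
  then show ?thesis by (simp add: side_def)
qed

lemma side_comm: "side E d c = {z. (c, z) \<in> (RR (E - {{c,d}}))\<^sup>*}"
  by (simp add: side_def insert_commute)

lemma side_cross:
  assumes "adj E z w" "z \<in> side E c d" "w \<notin> side E c d"
  shows "{z,w} = {c,d}"
proof (rule ccontr)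
  assume "{z,w} \<noteq> {c,d}"
  then have "(z, w) \<in> RR (E - {{c,d}})" using assms(1) by (simp add: adj_def)
  moreover have "(d, z) \<in> (RR (E - {{c,d}}))\<^sup>*" using assms(2) by (simp add: side_def)
  ultimately have "(d, w) \<in> (RR (E - {{c,d}}))\<^sup>*" by (rule rtrancl_into_rtrancl[rotated])
  then show False using assms(3) by (simp add: side_def)
qed

lemma reach_in_V:
  assumes "graph V E" "(a, b) \<in> (RR E)\<^sup>*" "a \<in> V" shows "b \<in> V"
  using assms(2)
proof (induction rule: rtrancl_induct)
  case base then show ?case using assms(3) .
next
  case (step y z)
  then have "{y,z} \<in> E" by (simp add: adj_def)
  then have "{y,z} \<subseteq> V" using assms(1) unfolding graph_def by blast
  then show ?case by simp
qed

lemma side_sub_V: "graph V E \<Longrightarrow> {c,d} \<in> E \<Longrightarrow> side E c d \<subseteq> V"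
proof
  fix z assume g: "graph V E" and cd: "{c,d} \<in> E" and z: "z \<in> side E c d"
  have "graph V (E - {{c,d}})" using g by (auto simp: graph_def)
  moreover have "d \<in> V" using g cd by (auto simp: graph_def)
  moreover have "(d, z) \<in> (RR (E - {{c,d}}))\<^sup>*" using z by (simp add: side_def)
  ultimately show "z \<in> V" using reach_in_V by metis
qed

lemma side_partition:
  assumes "connected_graph V E" "{c,d} \<in> E" "z \<in> V" "graph V E"
  shows "z \<in> side E c d \<union> side E d c"
proof -
  let ?F = "E - {{c,d}}"
  have "d \<in> V" using assms(2,4) by (auto simp: graph_def)
  then have "(d, z) \<in> (RR E)\<^sup>*" using assms(1,3) by (simp add: connected_graph_def)
  then have "(d, z) \<in> (RR ?F)\<^sup>* \<or> (c, z) \<in> (RR ?F)\<^sup>*"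
  proof (induction rule: rtrancl_induct)
    case base then show ?case by simp
  next
    case (step y w)
    show ?case
    proof (cases "{y,w} = {c,d}")
      case True then have "w = c \<or> w = d" by (auto simp: doubleton_eq_iff)
      then show ?thesis by auto
    next
      case False
      then have "(y, w) \<in> RR ?F" using step(2) by (simp add: adj_def)
      then show ?thesis using step.IH by (meson rtrancl.rtrancl_into_rtrancl)
    qed
  qed
  then show ?thesis unfolding side_def using side_comm[of E d c] by (auto simp: insert_commute)
qed

lemma side_disjoint:
  assumes "is_tree V E" "{c,d} \<in> E"
  shows "side E c d \<inter> side E d c = {}"
proof (rule ccontr)
  assume "side E c d \<inter> side E d c \<noteq> {}"
  then obtain z where "(d, z) \<in> (RR (E - {{c,d}}))\<^sup>*" "(c, z) \<in> (RR (E - {{c,d}}))\<^sup>*"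
    unfolding side_def using side_comm[of E d c] by (auto simp: insert_commute)
  then have "(d, c) \<in> (RR (E - {{c,d}}))\<^sup>*" using RR_sym by (meson rtrancl_trans)
  then show False using acyclic[OF assms(1), rule_format, OF assms(2)] by contradiction
qed

lemma side_sub:
  assumes "is_tree V E" "{c,d} \<in> E" "{d,e} \<in> E" "e \<noteq> c"
  shows "side E d e \<subseteq> side E c d" "d \<notin> side E d e"
proof -
  have g: "graph V E" using assms(1) by (simp add: is_tree_def)
  have ed: "e \<noteq> d" using graph_edge_ne[OF g assms(3)] by blast
  show dn: "d \<notin> side E d e" using side_not[OF assms(1,3)] .
  have cn: "c \<notin> side E c d" using side_not[OF assms(1,2)] .
  show "side E d e \<subseteq> side E c d"
  proof
    fix z assume "z \<in> side E d e"
    then have "(e, z) \<in> (RR (E - {{d,e}}))\<^sup>*" by (simp add: side_def)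
    then show "z \<in> side E c d"
    proof (induction rule: rtrancl_induct)
      case base
      have "{d,e} \<noteq> {c,d}" using assms(4) ed by (auto simp: doubleton_eq_iff)
      then have "(d, e) \<in> RR (E - {{c,d}})" using assms(3) by (simp add: adj_def)
      then have "(d, e) \<in> (RR (E - {{c,d}}))\<^sup>*" by (rule r_into_rtrancl)
      then show ?case by (simp add: side_def)
    next
      case (step y w)
      have "y \<in> side E d e" using step(1) by (simp add: side_def)
      then have yd: "y \<noteq> d" using dn by blast
      have yc: "y \<noteq> c" using step.IH cn by blast
      have "{y,w} \<noteq> {c,d}" using yd yc by (auto simp: doubleton_eq_iff)
      then have "(y, w) \<in> RR (E - {{c,d}})" using step(2) by (simp add: adj_def)
      moreover have "(d, y) \<in> (RR (E - {{c,d}}))\<^sup>*" using step.IH by (simp add: side_def)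
      ultimately have "(d, w) \<in> (RR (E - {{c,d}}))\<^sup>*" by (rule rtrancl_into_rtrancl[rotated])
      then show ?case by (simp add: side_def)
    qed
  qed
qed

lemma edge_other:
  assumes "graph V E" "f \<in> E" "d \<in> f"
  shows "\<exists>e. f = {d,e} \<and> e \<noteq> d"
proof -
  have "card f = 2" using assms by (simp add: graph_def)
  then obtain a b where ab: "f = {a,b}" "a \<noteq> b" unfolding card_2_iff by blast
  show ?thesis
  proof (cases "d = a")
    case True then show ?thesis using ab by blast
  next
    case False then have "d = b" using ab assms(3) by blast
    then show ?thesis using ab by (metis insert_commute)
  qed
qed

lemma two_elems: assumes "2 \<le> card A" obtains a b where "a \<in> A" "b \<in> A" "a \<noteq> b"
proof -
  have fin: "finite A" using assms by (metis card.infinite not_numeral_le_zero)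
  then have "A \<noteq> {}" using assms by auto
  then obtain a where a: "a \<in> A" by blast
  then have "card (A - {a}) \<ge> 1" using assms fin by (simp add: card_Diff_singleton)
  then have "A - {a} \<noteq> {}" by (cases "A - {a} = {}") simp_all
  then obtain b where "b \<in> A - {a}" by blast
  then show ?thesis using that a by blast
qed

lemma deg_pos_edge: assumes "graph V E" "{c,d} \<in> E" shows "1 \<le> degree E d"
proof -
  have "finite E" using graph_finite_E[OF assms(1)] .
  then have "finite {e \<in> E. d \<in> e}" by simp
  moreover have "{c,d} \<in> {e \<in> E. d \<in> e}" using assms(2) by simp
  ultimately have "0 < card {e \<in> E. d \<in> e}" using card_gt_0_iff by blast
  then show ?thesis by (simp add: degree_def)
qed

lemma nbr2:
  assumes "graph V E" "{c,d} \<in> E" "2 \<le> degree E d"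
  shows "\<exists>e. {d,e} \<in> E \<and> e \<noteq> c \<and> e \<noteq> d"
proof -
  let ?D = "{f \<in> E. d \<in> f} - {{c,d}}"
  have fin: "finite {f \<in> E. d \<in> f}" using graph_finite_E[OF assms(1)] by simp
  have "card ?D \<ge> 1" using assms(2,3) fin by (simp add: card_Diff_singleton degree_def)
  then have "?D \<noteq> {}" by (cases "?D = {}") simp_all
  then obtain f where f: "f \<in> E" "d \<in> f" "f \<noteq> {c,d}" by blast
  then obtain e where "f = {d,e}" "e \<noteq> d" using edge_other[OF assms(1)] by blast
  then show ?thesis using f by (metis insert_commute)
qed

lemma nbr3:
  assumes "graph V E" "{c,d} \<in> E" "3 \<le> degree E d"
  shows "\<exists>e1 e2. {d,e1} \<in> E \<and> {d,e2} \<in> E \<and> e1 \<noteq> c \<and> e2 \<noteq> c \<and> e1 \<noteq> e2 \<and> e1 \<noteq> d \<and> e2 \<noteq> d"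
proof -
  let ?D = "{f \<in> E. d \<in> f} - {{c,d}}"
  have fin: "finite {f \<in> E. d \<in> f}" using graph_finite_E[OF assms(1)] by simp
  have "card ?D \<ge> 2" using assms(2,3) fin by (simp add: card_Diff_singleton degree_def)
  then obtain f1 f2 where f: "f1 \<in> ?D" "f2 \<in> ?D" "f1 \<noteq> f2" by (rule two_elems)
  obtain e1 where e1: "f1 = {d,e1}" "e1 \<noteq> d" using edge_other[OF assms(1)] f(1) by blast
  obtain e2 where e2: "f2 = {d,e2}" "e2 \<noteq> d" using edge_other[OF assms(1)] f(2) by blast
  have "e1 \<noteq> c" using f(1) e1 by (auto simp: insert_commute)
  moreover have "e2 \<noteq> c" using f(2) e2 by (auto simp: insert_commute)
  moreover have "e1 \<noteq> e2" using f(3) e1 e2 by blast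
  ultimately show ?thesis using f e1 e2 by blast
qed

lemma side_leaf:
  assumes "is_tree V E" "\<forall>v\<in>V. degree E v \<noteq> 2"
  shows "{c,d} \<in> E \<Longrightarrow> \<exists>l\<in>side E c d. l \<in> leaves V E"
proof (induction "card (side E c d)" arbitrary: c d rule: less_induct)
  case less
  have g: "graph V E" and fin: "finite V" using assms(1) by (auto simp: is_tree_def graph_def)
  have dV: "d \<in> V" using g less.prems by (auto simp: graph_def)
  show ?case
  proof (cases "degree E d = 1")
    case True then show ?thesis using side_self[of d E c] dV unfolding leaves_def by blast
  next
    case False
    have "1 \<le> degree E d" using deg_pos_edge[OF g less.prems] .
    moreover have "degree E d \<noteq> 2" using assms(2) dV by blast
    ultimately have "2 \<le> degree E d" using False by linarith
    then obtain e where e: "{d,e} \<in> E" "e \<noteq> c" "e \<noteq> d" using nbr2[OF g less.prems] by blast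
    note ss = side_sub[OF assms(1) less.prems e(1) e(2)]
    have "finite (side E c d)" using side_sub_V[OF g less.prems] fin finite_subset by blast
    moreover have "side E d e \<subset> side E c d" using ss side_self[of d E c] by blast
    ultimately have "card (side E d e) < card (side E c d)" by (rule psubset_card_mono)
    then obtain l where "l \<in> side E d e" "l \<in> leaves V E" using less.hyps e(1) by blast
    then show ?thesis using ss(1) by blast
  qed
qed

lemma side_two_leaves:
  assumes "is_tree V E" "\<forall>v\<in>V. degree E v \<noteq> 2" "{c,d} \<in> E" "3 \<le> degree E d"
  shows "\<exists>l\<in>side E c d. l \<in> leaves V E \<and> l \<noteq> z0"
proof -
  have g: "graph V E" using assms(1) by (simp add: is_tree_def)
  obtain e1 e2 where e: "{d,e1} \<in> E" "{d,e2} \<in> E" "e1 \<noteq> c" "e2 \<noteq> c" "e1 \<noteq> e2"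
    using nbr3[OF g assms(3,4)] by blast
  have s1: "side E d e1 \<subseteq> side E c d" using side_sub[OF assms(1,3) e(1,3)] by blast
  have s2: "side E d e2 \<subseteq> side E c d" using side_sub[OF assms(1,3) e(2,4)] by blast
  have e1d: "{e1,d} \<in> E" using e(1) by (simp add: insert_commute)
  have s3: "side E d e2 \<subseteq> side E e1 d" using side_sub[OF assms(1) e1d e(2)] e(5) by blast
  have dis: "side E d e1 \<inter> side E e1 d = {}" using side_disjoint[OF assms(1) e(1)] .
  obtain l1 where l1: "l1 \<in> side E d e1" "l1 \<in> leaves V E" using side_leaf[OF assms(1,2) e(1)] by blast
  obtain l2 where l2: "l2 \<in> side E d e2" "l2 \<in> leaves V E" using side_leaf[OF assms(1,2) e(2)] by blast
  have "l1 \<noteq> l2" using l1 l2 s3 dis by blast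
  then show ?thesis using l1 l2 s1 s2 by blast
qed

lemma cross_index: "P (0::nat) \<Longrightarrow> \<not> P k \<Longrightarrow> \<exists>i<k. P i \<and> \<not> P (Suc i)"
proof (induction k)
  case 0 then show ?case by simp
next
  case (Suc k) then show ?case by (cases "P k") (auto intro: less_SucI)
qed

lemma cross_index2: "\<not> P (k::nat) \<Longrightarrow> P m \<Longrightarrow> k < m \<Longrightarrow> \<exists>j. k \<le> j \<and> j < m \<and> \<not> P j \<and> P (Suc j)"
proof (induction m)
  case 0 then show ?case by simp
next
  case (Suc m)
  show ?case
  proof (cases "P m")
    case True
    then have "k < m" using Suc.prems by (metis less_SucE)
    then show ?thesis using Suc.IH Suc.prems True by (meson less_SucI)
  next
    case False
    have "k \<le> m" using Suc.prems by simp
    then show ?thesis using False Suc.prems by blast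
  qed
qed

lemma path_stays:
  assumes "is_path V E p" "hd p \<in> C" "last p \<in> C"
    and cr: "\<forall>z w. adj E z w \<and> z \<in> C \<and> w \<notin> C \<longrightarrow> {z,w} = e0"
  shows "set p \<subseteq> C"
proof (rule ccontr)
  assume "\<not> set p \<subseteq> C"
  then obtain x where "x \<in> set p" "x \<notin> C" by blast
  then obtain k where k: "k < length p" "p ! k \<notin> C" by (metis in_set_conv_nth)
  have ne: "p \<noteq> []" and dist: "distinct p" using assms(1) by (auto simp: is_path_def)
  have p0: "p ! 0 \<in> C" using assms(2) ne by (simp add: hd_conv_nth)
  have pl: "p ! (length p - 1) \<in> C" using assms(3) ne by (simp add: last_conv_nth)
  have "k \<noteq> length p - 1" using k(2) pl by auto
  then have kl: "k < length p - 1" using k(1) by linarith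
  obtain i where i: "i < k" "p ! i \<in> C" "p ! Suc i \<notin> C"
    using cross_index[of "\<lambda>i. p ! i \<in> C", OF p0 k(2)] by blast
  obtain j where j: "k \<le> j" "j < length p - 1" "p ! j \<notin> C" "p ! Suc j \<in> C"
    using cross_index2[of "\<lambda>i. p ! i \<in> C", OF k(2) pl kl] by blast
  have a1: "adj E (p ! i) (p ! Suc i)" using assms(1) i(1) k(1) by (simp add: is_path_def)
  have "Suc j < length p" using j(2) by simp
  then have "adj E (p ! j) (p ! Suc j)" using assms(1) by (simp add: is_path_def)
  then have a2: "adj E (p ! Suc j) (p ! j)" by (subst adj_sym)
  have "{p ! i, p ! Suc i} = e0" using cr[rule_format, OF conjI[OF a1 conjI[OF i(2) i(3)]]] .
  moreover have "{p ! Suc j, p ! j} = e0" using cr[rule_format, OF conjI[OF a2 conjI[OF j(4) j(3)]]] .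
  ultimately have "p ! i \<in> {p ! Suc j, p ! j}" by auto
  moreover have "p ! i \<noteq> p ! j" using i(2) j(3) by auto
  ultimately have "p ! i = p ! Suc j" by simp
  then have "i = Suc j" using dist i(1) k(1) j(2) by (simp add: nth_eq_iff_index_eq)
  then show False using i(1) j(1) by simp
qed

lemma l2l:
  assumes "graph V E" "is_path V E p" "2 \<le> length p" "hd p \<in> leaves V E" "last p \<in> leaves V E"
  shows "leaf_to_leaf_path V E p"
  unfolding leaf_to_leaf_path_def using assms interior_not_leaf[OF assms(1,2)] by blast

lemma pairing_card:
  assumes "pairing V E S P" shows "card S \<le> 2 * card P"
proof -
  have fin: "finite P" using assms by (simp add: pairing_def)
  have "S \<subseteq> (\<Union>p\<in>P. {hd p, last p})" using assms unfolding pairing_def endpoint_def by blast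
  then have "card S \<le> card (\<Union>p\<in>P. {hd p, last p})" using fin by (intro card_mono) auto
  also have "\<dots> \<le> (\<Sum>p\<in>P. card {hd p, last p})" by (rule card_UN_le[OF fin])
  also have "\<dots> \<le> (\<Sum>p\<in>P. 2)" by (intro sum_mono) (simp add: card_insert_le_m1)
  finally show ?thesis by simp
qed

lemma pairing_in_side:
  assumes "pairing V E S P" "S \<subseteq> C" "p \<in> P"
    "\<forall>z w. adj E z w \<and> z \<in> C \<and> w \<notin> C \<longrightarrow> {z,w} = e0"
  shows "set p \<subseteq> C"
proof -
  have "is_path V E p" "hd p \<in> S" "last p \<in> S" using assms(1,3) unfolding pairing_def by auto
  then show ?thesis using path_stays[OF _ _ _ assms(4)] assms(2) by blast
qed

theorem lemma3:
  fixes V :: "'v set" and E :: "'v set set" and X :: "'v set" and x y :: 'v and n q :: nat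
  assumes "binary_phylo_tree V E X"
    and "card X = n" and "n \<ge> 3"
    and "x \<in> X" and "y \<in> X" and "x \<noteq> y"
    and "\<not> cherry E x y"
    and "q = max 2 ((n - 1) div 2)"
  shows "\<exists>P :: nat \<Rightarrow> 'v list.
           (\<forall>i\<in>{1..q}. leaf_to_leaf_path V E (P i)) \<and>
           (\<forall>i\<in>{1..q}. \<forall>j\<in>{1..q}. i \<noteq> j \<longrightarrow> path_edges (P i) \<inter> path_edges (P j) = {}) \<and>
           endpoint x (P 1) \<and> endpoint y (P 2)"
proof -
  have tr: "is_tree V E" and lv: "leaves V E = X" and dg: "\<forall>v\<in>V. degree E v \<noteq> 2 \<and> degree E v \<le> 3"
    using assms(1) by (auto simp: binary_phylo_tree_def)
  have g: "graph V E" and conn: "connected_graph V E" and finV: "finite V"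
    using tr by (auto simp: is_tree_def graph_def)
  have nd2: "\<forall>v\<in>V. degree E v \<noteq> 2" using dg by blast
  have XV: "X \<subseteq> V" using lv by (auto simp: leaves_def)
  have finX: "finite X" using XV finV finite_subset by blast
  have xV: "x \<in> V" "degree E x = 1" using assms(4) lv by (auto simp: leaves_def)
  have yV: "y \<in> V" "degree E y = 1" using assms(5) lv by (auto simp: leaves_def)
  obtain u where u: "{x,u} \<in> E" "u \<noteq> x" "\<forall>e\<in>E. x \<in> e \<longrightarrow> e = {x,u}"
    using leaf_edge[OF g xV(2)] by blast
  have uV: "u \<in> V" using u(1) g by (auto simp: graph_def)
  have u1: "degree E u \<noteq> 1"
  proof
    assume du: "degree E u = 1"
    obtain w where w: "{u,w} \<in> E" "w \<noteq> u" "\<forall>e\<in>E. u \<in> e \<longrightarrow> e = {u,w}"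
      using leaf_edge[OF g du] by blast
    have xu: "{x,u} = {u,w}" using w(3) u(1) by blast
    have isoU: "\<forall>e\<in>E - {{x,u}}. u \<notin> e"
    proof (intro ballI notI)
      fix e assume e: "e \<in> E - {{x,u}}" "u \<in> e"
      then have "e = {u,w}" using w(3) by blast
      then show False using e(1) xu by blast
    qed
    have isoX: "\<forall>e\<in>E - {{x,u}}. x \<notin> e" using u(3) by blast
    have "V \<subseteq> {x,u}"
    proof
      fix z assume "z \<in> V"
      then have "z \<in> side E x u \<union> side E u x" using side_partition[OF conn u(1) _ g] by blast
      moreover have "z = u" if "z \<in> side E x u"
      proof -
        have "(u, z) \<in> (RR (E - {{x,u}}))\<^sup>*" using that by (simp add: side_def)
        then show ?thesis by (rule isolated_reach[OF isoU])
      qed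
      moreover have "z = x" if "z \<in> side E u x"
      proof -
        have "(x, z) \<in> (RR (E - {{x,u}}))\<^sup>*" using that side_comm[of E u x] by simp
        then show ?thesis by (rule isolated_reach[OF isoX])
      qed
      ultimately show "z \<in> {x,u}" by blast
    qed
    then have "card X \<le> card {x,u}" using XV by (intro card_mono) auto
    also have "\<dots> \<le> 2" by (simp add: card_insert_le_m1)
    finally show False using assms(2,3) by simp
  qed
  have u3: "3 \<le> degree E u"
  proof -
    have "1 \<le> degree E u" using deg_pos_edge[OF g u(1)] .
    moreover have "degree E u \<noteq> 2" using nd2 uV by blast
    ultimately show ?thesis using u1 by linarith
  qed
  have yu: "y \<noteq> u" using yV u1 by auto
  let ?Eu = "{e \<in> E. u \<notin> e}"
  have isoU: "\<forall>e\<in>?Eu. u \<notin> e" by blast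
  have isoX: "\<forall>e\<in>?Eu. x \<notin> e" using u(3) by blast
  have reach: "(y, z) \<in> (RR ?Eu)\<^sup>* \<or> (\<exists>a. (y, a) \<in> (RR ?Eu)\<^sup>* \<and> adj E a u)"
    if "(y, z) \<in> (RR E)\<^sup>*" for z
    using that
  proof (induction rule: rtrancl_induct)
    case base then show ?case by simp
  next
    case (step w z)
    show ?case
    proof (cases "(y, w) \<in> (RR ?Eu)\<^sup>*")
      case True
      have wu: "w \<noteq> u"
      proof
        assume "w = u"
        then have "(u, y) \<in> (RR ?Eu)\<^sup>*" using RR_sym[OF True] by simp
        then have "y = u" by (rule isolated_reach[OF isoU])
        then show False using yu by contradiction
      qed
      show ?thesis
      proof (cases "z = u")
        case True then have "adj E w u" using step(2) by simp
        then show ?thesis using \<open>(y, w) \<in> (RR ?Eu)\<^sup>*\<close> by blast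
      next
        case False
        then have "(w, z) \<in> RR ?Eu" using step(2) wu by (simp add: adj_def)
        with \<open>(y, w) \<in> (RR ?Eu)\<^sup>*\<close> have "(y, z) \<in> (RR ?Eu)\<^sup>*" by (rule rtrancl_into_rtrancl)
        then show ?thesis by blast
      qed
    next
      case False then show ?thesis using step.IH by blast
    qed
  qed
  have "(y, u) \<in> (RR E)\<^sup>*" using conn[unfolded connected_graph_def, rule_format, OF yV(1) uV] .
  moreover have "(y, u) \<notin> (RR ?Eu)\<^sup>*"
  proof
    assume "(y, u) \<in> (RR ?Eu)\<^sup>*"
    then have "(u, y) \<in> (RR ?Eu)\<^sup>*" by (rule RR_sym)
    then have "y = u" by (rule isolated_reach[OF isoU])
    then show False using yu by contradiction
  qed
  ultimately have "\<exists>a. (y, a) \<in> (RR ?Eu)\<^sup>* \<and> adj E a u" using reach[of u] by blast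
  then obtain a where a: "(y, a) \<in> (RR ?Eu)\<^sup>*" "adj E a u" by blast
  have ax: "a \<noteq> x"
  proof
    assume "a = x"
    then have "(x, y) \<in> (RR ?Eu)\<^sup>*" using RR_sym[OF a(1)] by simp
    then have "y = x" by (rule isolated_reach[OF isoX])
    then show False using assms(6) by simp
  qed
  have ua: "{u,a} \<in> E" using a(2) by (simp add: adj_def insert_commute)
  have au: "{a,u} \<in> E" using a(2) by (simp add: adj_def)
  have aV: "a \<in> V" using ua g by (auto simp: graph_def)
  have yA: "y \<in> side E u a"
  proof -
    have "(a, y) \<in> (RR ?Eu)\<^sup>*" using RR_sym[OF a(1)] .
    moreover have "?Eu \<subseteq> E - {{u,a}}" by blast
    ultimately have "(a, y) \<in> (RR (E - {{u,a}}))\<^sup>*" by (rule RR_mono[rotated])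
    then show ?thesis by (simp add: side_def)
  qed
  have xW: "x \<in> side E a u"
  proof -
    have "{u,x} \<noteq> {a,u}" using ax u(2) by (auto simp: doubleton_eq_iff)
    then have "(u, x) \<in> RR (E - {{a,u}})" using u(1) by (simp add: adj_def insert_commute)
    then have "(u, x) \<in> (RR (E - {{a,u}}))\<^sup>*" by (rule r_into_rtrancl)
    then show ?thesis by (simp add: side_def)
  qed
  have a1: "degree E a \<noteq> 1"
  proof
    assume da: "degree E a = 1"
    obtain w where w: "{a,w} \<in> E" "w \<noteq> a" "\<forall>e\<in>E. a \<in> e \<longrightarrow> e = {a,w}"
      using leaf_edge[OF g da] by blast
    have auw: "{a,u} = {a,w}" using w(3) au by simp
    have isoA: "\<forall>e\<in>E - {{u,a}}. a \<notin> e"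
    proof (intro ballI notI)
      fix e assume e: "e \<in> E - {{u,a}}" "a \<in> e"
      then have "e = {a,w}" using w(3) by blast
      then have "e = {u,a}" using auw by (simp add: insert_commute)
      then show False using e(1) by blast
    qed
    have "(a, y) \<in> (RR (E - {{u,a}}))\<^sup>*" using yA by (simp add: side_def)
    then have "y = a" using isolated_reach[OF isoA] by blast
    then have "adj E x u \<and> adj E y u" using u(1) a(2) by (simp add: adj_def)
    then have "cherry E x y" unfolding cherry_def by blast
    then show False using assms(7) by blast
  qed
  have a3: "3 \<le> degree E a"
  proof -
    have "1 \<le> degree E a" using deg_pos_edge[OF g ua] .
    moreover have "degree E a \<noteq> 2" using nd2 aV by blast
    ultimately show ?thesis using a1 by linarith
  qed
  define A where "A = side E u a"
  define W where "W = side E a u"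
  obtain lA where lA: "lA \<in> A" "lA \<in> X" "lA \<noteq> y"
    using side_two_leaves[OF tr nd2 ua a3, of y] lv A_def by blast
  obtain lW where lW: "lW \<in> W" "lW \<in> X" "lW \<noteq> x"
    using side_two_leaves[OF tr nd2 au u3, of x] lv W_def by blast
  have disj: "A \<inter> W = {}" using side_disjoint[OF tr ua] A_def W_def by simp
  have part: "X \<subseteq> A \<union> W"
  proof
    fix z assume "z \<in> X"
    then have "z \<in> V" using XV by blast
    then show "z \<in> A \<union> W" unfolding A_def W_def by (rule side_partition[OF conn ua _ g])
  qed
  have crA: "\<forall>z w. adj E z w \<and> z \<in> A \<and> w \<notin> A \<longrightarrow> {z,w} = {u,a}"
    unfolding A_def using side_cross by metis
  have crW: "\<forall>z w. adj E z w \<and> z \<in> W \<and> w \<notin> W \<longrightarrow> {z,w} = {a,u}"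
    unfolding W_def using side_cross by metis
  define XA where "XA = X \<inter> A"
  define XW where "XW = X \<inter> W"
  have finXA: "finite XA" and finXW: "finite XW" using finX XA_def XW_def by auto
  have XAW: "XA \<union> XW = X" "XA \<inter> XW = {}" using part disj XA_def XW_def by auto
  have cardn: "card XA + card XW = n"
    using card_Un_disjoint[OF finXA finXW XAW(2)] XAW(1) assms(2) by simp
  have yXA: "y \<in> XA" using yA assms(5) XA_def A_def by blast
  have lXA: "lA \<in> XA" using lA XA_def by blast
  have xXW: "x \<in> XW" using xW assms(4) XW_def W_def by blast
  have lXW: "lW \<in> XW" using lW XW_def by blast
  have cA2: "2 \<le> card XA"
  proof -
    have "card {y, lA} \<le> card XA" using yXA lXA finXA by (intro card_mono) auto
    then show ?thesis using lA(3) by simp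
  qed
  have cW2: "2 \<le> card XW"
  proof -
    have "card {x, lW} \<le> card XW" using xXW lXW finXW by (intro card_mono) auto
    then show ?thesis using lW(3) by simp
  qed
  define SA where "SA = (if even (card XA) then XA else XA - {lA})"
  define SW where "SW = (if even (card XW) then XW else XW - {lW})"
  have SA: "SA \<subseteq> XA" "even (card SA)" "y \<in> SA" "card XA \<le> card SA + 1" "2 \<le> card SA"
  proof -
    show "SA \<subseteq> XA" unfolding SA_def by auto
    show "y \<in> SA" unfolding SA_def using yXA lA(3) by auto
    show "even (card SA)" "card XA \<le> card SA + 1" "2 \<le> card SA"
    proof (atomize (full), cases "even (card XA)")
      case True then show "even (card SA) \<and> card XA \<le> card SA + 1 \<and> 2 \<le> card SA"
        unfolding SA_def using cA2 by simp
    next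
      case False
      have "card (XA - {lA}) = card XA - 1" using lXA finXA by (simp add: card_Diff_singleton)
      moreover have "3 \<le> card XA" using False cA2 by presburger
      ultimately show "even (card SA) \<and> card XA \<le> card SA + 1 \<and> 2 \<le> card SA"
        unfolding SA_def using False by simp
    qed
  qed
  have SW: "SW \<subseteq> XW" "even (card SW)" "x \<in> SW" "card XW \<le> card SW + 1" "2 \<le> card SW"
  proof -
    show "SW \<subseteq> XW" unfolding SW_def by auto
    show "x \<in> SW" unfolding SW_def using xXW lW(3) by auto
    show "even (card SW)" "card XW \<le> card SW + 1" "2 \<le> card SW"
    proof (atomize (full), cases "even (card XW)")
      case True then show "even (card SW) \<and> card XW \<le> card SW + 1 \<and> 2 \<le> card SW"
        unfolding SW_def using cW2 by simp
    next
      case False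
      have "card (XW - {lW}) = card XW - 1" using lXW finXW by (simp add: card_Diff_singleton)
      moreover have "3 \<le> card XW" using False cW2 by presburger
      ultimately show "even (card SW) \<and> card XW \<le> card SW + 1 \<and> 2 \<le> card SW"
        unfolding SW_def using False by simp
    qed
  qed
  have SAV: "SA \<subseteq> V" using SA(1) XA_def XV by blast
  have SWV: "SW \<subseteq> V" using SW(1) XW_def XV by blast
  have SAA: "SA \<subseteq> A" using SA(1) XA_def by blast
  have SWW: "SW \<subseteq> W" using SW(1) XW_def by blast
  obtain PA where PA: "pairing V E SA PA" using pairing_exists[OF tr] SAV SA(2) by blast
  obtain PW where PW: "pairing V E SW PW" using pairing_exists[OF tr] SWV SW(2) by blast
  have inA: "set p \<subseteq> A" if "p \<in> PA" for p using pairing_in_side[OF PA SAA that crA] .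
  have inW: "set p \<subseteq> W" if "p \<in> PW" for p using pairing_in_side[OF PW SWW that crW] .
  have crossd: "path_edges p \<inter> path_edges p' = {}" if "p \<in> PA" "p' \<in> PW" for p p'
  proof (rule ccontr)
    assume "path_edges p \<inter> path_edges p' \<noteq> {}"
    then obtain e where e: "e \<in> path_edges p" "e \<in> path_edges p'" by blast
    then have "e \<subseteq> A" "e \<subseteq> W" "e \<noteq> {}" using path_edges_sub_set inA[OF that(1)] inW[OF that(2)] by blast+
    then show False using disj by blast
  qed
  have PAprops: "\<forall>p\<in>PA. is_path V E p \<and> 2 \<le> length p \<and> hd p \<in> SA \<and> last p \<in> SA"
    using PA by (simp add: pairing_def)
  have PWprops: "\<forall>p\<in>PW. is_path V E p \<and> 2 \<le> length p \<and> hd p \<in> SW \<and> last p \<in> SW"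
    using PW by (simp add: pairing_def)
  have PAW: "PA \<inter> PW = {}"
  proof (rule ccontr)
    assume "PA \<inter> PW \<noteq> {}"
    then obtain p where p: "p \<in> PA" "p \<in> PW" by blast
    then have "path_edges p \<noteq> {}" using PAprops path_edges_nonempty by blast
    then show False using crossd[OF p] by blast
  qed
  define PP where "PP = PA \<union> PW"
  have finPA: "finite PA" and finPW: "finite PW" using PA PW by (auto simp: pairing_def)
  have finPP: "finite PP" using finPA finPW PP_def by simp
  have PPprops: "is_path V E p \<and> 2 \<le> length p \<and> hd p \<in> X \<and> last p \<in> X" if "p \<in> PP" for p
  proof -
    have "p \<in> PA \<or> p \<in> PW" using that PP_def by blast
    then show ?thesis
    proof
      assume "p \<in> PA" then show ?thesis using PAprops SA(1) XA_def by blast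
    next
      assume "p \<in> PW" then show ?thesis using PWprops SW(1) XW_def by blast
    qed
  qed
  have PPdisj: "path_edges p \<inter> path_edges p' = {}" if "p \<in> PP" "p' \<in> PP" "p \<noteq> p'" for p p'
  proof -
    have A1: "p \<in> PA \<or> p \<in> PW" "p' \<in> PA \<or> p' \<in> PW" using that PP_def by blast+
    have sA: "\<forall>p\<in>PA. \<forall>p'\<in>PA. p \<noteq> p' \<longrightarrow> path_edges p \<inter> path_edges p' = {}"
      using PA unfolding pairing_def by blast
    have sW: "\<forall>p\<in>PW. \<forall>p'\<in>PW. p \<noteq> p' \<longrightarrow> path_edges p \<inter> path_edges p' = {}"
      using PW unfolding pairing_def by blast
    show ?thesis using A1 sA sW crossd that(3) by blast
  qed
  have cardPP: "card PP = card PA + card PW" using card_Un_disjoint[OF finPA finPW PAW] PP_def by simp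
  have c1: "card SA \<le> 2 * card PA" using pairing_card[OF PA] .
  have c2: "card SW \<le> 2 * card PW" using pairing_card[OF PW] .
  have c3: "card SA \<le> card XA" using SA(1) finXA by (rule card_mono[rotated])
  have c4: "card SW \<le> card XW" using SW(1) finXW by (rule card_mono[rotated])
  have "2 * ((n - 1) div 2) \<le> card SA + card SW"
    using cardn SA(2,4) SW(2,4) c3 c4 by presburger
  then have qle: "q \<le> card PP" using assms(8) cardPP c1 c2 SA(5) SW(5) by linarith
  obtain px where px: "px \<in> PW" "endpoint x px" using PW SW(3) unfolding pairing_def by blast
  obtain py where py: "py \<in> PA" "endpoint y py" using PA SA(3) unfolding pairing_def by blast
  have pxy: "px \<noteq> py" using px(1) py(1) PAW by blast
  have pxP: "px \<in> PP" and pyP: "py \<in> PP" using px py PP_def by auto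
  define R where "R = PP - {px, py}"
  have finR: "finite R" using finPP R_def by simp
  have cardR: "card R = card PP - 2"
  proof -
    have "card R = card PP - card {px, py}" unfolding R_def using finPP pxP pyP
      by (intro card_Diff_subset) auto
    then show ?thesis using pxy by simp
  qed
  obtain f where f: "bij_betw f {0..<card R} R" using ex_bij_betw_nat_finite[OF finR] by blast
  define P where "P = (\<lambda>i::nat. if i = 1 then px else if i = 2 then py else f (i - 3))"
  have fR: "f k \<in> R" if "k < card R" for k using f that by (auto simp: bij_betw_def)
  have Pin: "P i \<in> PP" if iq: "i \<in> {1..q}" for i
  proof -
    consider "i = 1" | "i = 2" | "3 \<le> i" using iq by fastforce
    then show ?thesis
    proof cases
      case 3
      then have "i - 3 < card R" using iq qle cardR by auto
      then show ?thesis using fR R_def P_def 3 by auto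
    qed (use pxP pyP P_def in auto)
  qed
  have Pinj: "P i \<noteq> P j" if ij: "i \<in> {1..q}" "j \<in> {1..q}" "i \<noteq> j" for i j
  proof -
    have fne: "f k \<noteq> px \<and> f k \<noteq> py" if "k < card R" for k using fR[OF that] R_def by auto
    have inj: "inj_on f {0..<card R}" using f by (simp add: bij_betw_def)
    have lt: "k - 3 < card R" if "k \<in> {1..q}" "3 \<le> k" for k using that qle cardR by auto
    have ci: "i = 1 \<or> i = 2 \<or> 3 \<le> i" "j = 1 \<or> j = 2 \<or> 3 \<le> j" using ij by auto
    show ?thesis
    proof (cases "3 \<le> i \<and> 3 \<le> j")
      case True
      then have "i - 3 \<noteq> j - 3" using ij(3) by arith
      moreover have "i - 3 \<in> {0..<card R}" "j - 3 \<in> {0..<card R}" using lt ij True by auto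
      ultimately have "f (i - 3) \<noteq> f (j - 3)" using inj inj_onD by metis
      then show ?thesis using True by (simp add: P_def)
    next
      case False
      then show ?thesis using ci ij pxy fne lt by (auto simp: P_def)
    qed
  qed
  show ?thesis
  proof (rule exI[of _ P], intro conjI ballI impI)
    fix i assume "i \<in> {1..q}"
    then have "P i \<in> PP" by (rule Pin)
    then show "leaf_to_leaf_path V E (P i)" using PPprops lv l2l[OF g] by metis
  next
    fix i j assume "i \<in> {1..q}" "j \<in> {1..q}" "i \<noteq> j"
    then show "path_edges (P i) \<inter> path_edges (P j) = {}" using PPdisj Pin Pinj by blast
  next
    show "endpoint x (P 1)" using px P_def by simp
  next
    show "endpoint y (P 2)" using py P_def by simp
  qed
qed

end
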